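(* Let $F$ be the distribution function of a non-negative random variable with density $f=F'$ and $\int_0^\infty(1-F(t))dt<\infty$. Fix $T\in(0,\infty)$. Let $\{(\xi_{n,i},i=1,\dots,n+1),n\ge1\}$ be a row-wise independent triangular array where, in each row, the $\xi_{n,i}$ are i.i.d. with distribution $F$. Let $\mathcal A_n:=\{\sum_{i=1}^n\xi_{n,i}\le T<\sum_{i=1}^{n+1}\xi_{n,i}\}$ (of positive probability), and let $\mu_n:=\mathbb E[\xi_{n,1}\mid\mathcal A_n]$. Then (i) $\mu_n\to0$ as $n\to\infty$; (ii) $\mathrm{Var}(\xi_{n,1}):=\mathbb E[(\xi_{n,1}-\mu_n)^2\mid\mathcal A_n]\to0$ as $n\to\infty$; (iii) $n\mu_n\to T$ as $n\to\infty$.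
   Context: Under $\mathbb P(\cdot\mid\mathcal A_n)$ the variables $\xi_{n,1},\dots,\xi_{n,n}$ are exchangeable, hence identically distributed, so $\mu_n=\mathbb E[\xi_{n,i}\mid\mathcal A_n]$ for each $i\le n$. *)

theory Defs
  imports "HOL-Probability.Probability"
begin

definition cond_event_exp :: "'a measure \<Rightarrow> 'a set \<Rightarrow> ('a \<Rightarrow> real) \<Rightarrow> real" where
  "cond_event_exp M A X = (\<integral>x. X x * indicator A x \<partial>M) / measure M A"

definition renewal_event ::
  "'a measure \<Rightarrow> (nat \<Rightarrow> nat \<Rightarrow> 'a \<Rightarrow> real) \<Rightarrow> real \<Rightarrow> nat \<Rightarrow> 'a set" where
  "renewal_event M \<xi> T n =
     {x \<in> space M. (\<Sum>i=1..n. \<xi> n i x) \<le> T \<and> T < (\<Sum>i=1..n+1. \<xi> n i x)}"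

end

theory Submission
  imports Defs
begin



lemma (in prob_space) perm_invariant:
  fixes X :: "nat \<Rightarrow> 'a \<Rightarrow> real" and D :: "real measure" and h :: "(nat \<Rightarrow> real) \<Rightarrow> real"
  assumes I: "finite I" "I \<noteq> {}" and ind: "indep_vars (\<lambda>_. borel) X I"
    and rv: "\<And>i. i \<in> I \<Longrightarrow> X i \<in> borel_measurable M"
    and D: "\<And>i. i \<in> I \<Longrightarrow> distr M borel (X i) = D"
    and \<sigma>: "inj_on \<sigma> I" "\<sigma> \<in> I \<rightarrow> I"
    and h: "h \<in> borel_measurable (PiM I (\<lambda>_. borel))"
  shows "(\<integral>x. h (\<lambda>j\<in>I. X (\<sigma> j) x) \<partial>M) = (\<integral>x. h (\<lambda>j\<in>I. X j x) \<partial>M)"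
proof -
  let ?P = "PiM I (\<lambda>_. borel :: real measure)"
  let ?Q = "PiM I (\<lambda>_. D)"
  let ?V = "\<lambda>x. \<lambda>j\<in>I. X j x"
  let ?\<Phi> = "\<lambda>\<omega>. \<lambda>j\<in>I. \<omega> (\<sigma> j)"
  obtain i0 where i0: "i0 \<in> I" using I by auto
  have sD: "sets D = sets borel" using D[OF i0] by (metis sets_distr)
  have pD: "prob_space D" using D[OF i0] rv[OF i0] by (metis prob_space_distr)
  have sQ: "sets ?Q = sets ?P" by (intro sets_PiM_cong) (auto simp: sD)
  have Vm: "?V \<in> measurable M ?P" using rv by (intro measurable_restrict) auto
  have eq: "distr M ?P ?V = ?Q"
  proof -
    have "distr M ?P ?V = PiM I (\<lambda>i. distr M borel (X i))"
      using indep_vars_iff_distr_eq_PiM'[THEN iffD1, OF I(2) rv ind] by simp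
    also have "\<dots> = ?Q" by (intro PiM_cong) (auto simp: D)
    finally show ?thesis .
  qed
  have Phim: "?\<Phi> \<in> measurable ?Q ?Q"
    using \<sigma> by (intro measurable_restrict measurable_component_singleton) auto
  have PhimP: "?\<Phi> \<in> measurable ?P ?P"
    using \<sigma> by (intro measurable_restrict measurable_component_singleton) auto
  have hPhi: "(\<lambda>\<omega>. h (?\<Phi> \<omega>)) \<in> borel_measurable ?P"
    using measurable_comp[OF PhimP h] by (simp add: comp_def)
  have re: "distr ?Q ?Q ?\<Phi> = ?Q"
    using distr_PiM_reindex[of I "\<lambda>_. D" \<sigma> I] \<sigma> pD by simp
  have hQ: "h \<in> borel_measurable ?Q" using h sQ by (simp cong: measurable_cong_sets)
  have "(\<integral>x. h (\<lambda>j\<in>I. X (\<sigma> j) x) \<partial>M) = (\<integral>x. h (?\<Phi> (?V x)) \<partial>M)"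
    using \<sigma> by (intro Bochner_Integration.integral_cong refl arg_cong[where f=h]) (auto simp: restrict_def fun_eq_iff Pi_iff)
  also have "\<dots> = (\<integral>\<omega>. h (?\<Phi> \<omega>) \<partial>distr M ?P ?V)"
    using integral_distr[OF Vm hPhi] by simp
  also have "\<dots> = (\<integral>\<omega>. h (?\<Phi> \<omega>) \<partial>?Q)" by (simp add: eq)
  also have "\<dots> = (\<integral>\<omega>. h \<omega> \<partial>distr ?Q ?Q ?\<Phi>)"
    using integral_distr[OF Phim hQ] by simp
  also have "\<dots> = (\<integral>\<omega>. h \<omega> \<partial>distr M ?P ?V)" by (simp add: re eq)
  also have "\<dots> = (\<integral>x. h (?V x) \<partial>M)"
    by (rule integral_distr[OF Vm h])
  finally show ?thesis .
qed


lemma arith1: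
  fixes E p \<kappa> Q T a b \<delta> :: real
  assumes p: "0 < p" and k: "0 < \<kappa>" and Q: "0 < Q" and T: "0 \<le> T" and a: "0 \<le> a" and b: "0 \<le> b"
    and h1: "E * p \<le> \<delta> * p + T * a" and h2: "a * Q \<le> T * b" and h3: "b * \<kappa> \<le> p"
  shows "E \<le> \<delta> + T\<^sup>2 / (\<kappa> * Q)"
proof -
  have kQ: "0 < \<kappa> * Q" using k Q by simp
  have "(E - \<delta>) * p \<le> T * a" using h1 by (simp add: algebra_simps)
  then have "(E - \<delta>) * p * (\<kappa> * Q) \<le> T * a * (\<kappa> * Q)" using kQ by (simp add: mult_right_mono)
  also have "T * a * (\<kappa> * Q) = T * \<kappa> * (a * Q)" by (simp add: algebra_simps)
  also have "\<dots> \<le> T * \<kappa> * (T * b)" using h2 T k by (simp add: mult_left_mono)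
  also have "T * \<kappa> * (T * b) = T\<^sup>2 * (b * \<kappa>)" by (simp add: algebra_simps power2_eq_square)
  also have "\<dots> \<le> T\<^sup>2 * p" using h3 by (simp add: mult_left_mono)
  finally have "((E - \<delta>) * (\<kappa> * Q)) * p \<le> T\<^sup>2 * p" by (simp add: algebra_simps)
  then have "(E - \<delta>) * (\<kappa> * Q) \<le> T\<^sup>2" using p by simp
  then have "E - \<delta> \<le> T\<^sup>2 / (\<kappa> * Q)" using kQ by (simp add: pos_le_divide_eq)
  then show ?thesis by simp
qed

definition gcut :: "real \<Rightarrow> real \<Rightarrow> real" where
  "gcut \<delta> y = y * indicator {0..\<delta>} y"

lemma gcut_meas[measurable]: "gcut \<delta> \<in> borel_measurable borel"
  unfolding gcut_def by measurable

lemma gcut_nonneg: "0 \<le> gcut \<delta> y" by (simp add: gcut_def indicator_def)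
lemma gcut_le: "0 \<le> \<delta> \<Longrightarrow> gcut \<delta> y \<le> \<delta>" by (simp add: gcut_def indicator_def)
lemma gcut_le_y: "0 \<le> y \<Longrightarrow> gcut \<delta> y \<le> y" by (simp add: gcut_def indicator_def)
lemma gcut_nz: "gcut \<delta> y \<noteq> 0 \<Longrightarrow> 0 \<le> y \<and> y \<le> \<delta>" by (simp add: gcut_def indicator_def split: if_splits)

locale row = prob_space +
  fixes X :: "nat \<Rightarrow> 'a \<Rightarrow> real" and n :: nat and T :: real and F :: "real \<Rightarrow> real"
    and D :: "real measure"
  assumes n: "1 \<le> n" and T: "0 < T"
  and rv[measurable]: "\<And>i. X i \<in> borel_measurable M"
  and ind: "indep_vars (\<lambda>_. borel) X {1..n+1}"
  and D: "\<And>i. i \<in> {1..n+1} \<Longrightarrow> distr M borel (X i) = D"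
  and cdf: "\<And>i t. i \<in> {1..n+1} \<Longrightarrow> measure M {x\<in>space M. X i x \<le> t} = F t"
  and Fneg: "\<And>t. t < 0 \<Longrightarrow> F t = 0"
  and D0: "emeasure D {0} = 0"
begin

definition "S x = (\<Sum>i=1..n. X i x)"
definition "A = {x\<in>space M. S x \<le> T \<and> T < S x + X (n+1) x}"

lemma S_meas[measurable]: "S \<in> borel_measurable M" unfolding S_def by measurable
lemma A_sets[measurable]: "A \<in> sets M" unfolding A_def by measurable

lemma nn_i: assumes i: "i \<in> {1..n+1}" shows "AE x in M. 0 \<le> X i x"
proof -
  have "AE x in M. \<forall>k::nat. - inverse (real (Suc k)) < X i x"
  proof (rule AE_all_countable[THEN iffD2], intro allI)
    fix k
    show "AE x in M. - inverse (real (Suc k)) < X i x"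
      apply (rule AE_I[where N="{x\<in>space M. X i x \<le> - inverse (real (Suc k))}"])
      using cdf[OF i, of "- inverse (real (Suc k))"] Fneg[of "- inverse (real (Suc k))"]
      by (auto simp: emeasure_eq_measure)
  qed
  then show ?thesis
  proof (rule AE_mp, intro AE_I2 impI)
    fix x assume h: "\<forall>k::nat. - inverse (real (Suc k)) < X i x"
    show "0 \<le> X i x"
    proof (rule ccontr)
      assume "\<not> 0 \<le> X i x"
      then obtain k where "inverse (real (Suc k)) < - X i x"
        using reals_Archimedean by (metis neg_0_less_iff_less not_le)
      with h[rule_format, of k] show False by auto
    qed
  qed
qed

lemma nn: "AE x in M. \<forall>i\<in>{1..n+1}. 0 \<le> X i x"
  by (rule AE_finite_allI) (auto intro: nn_i)

lemma nnS: "AE x in M. 0 \<le> S x \<and> (\<forall>i\<in>{1..n}. X i x \<le> S x)"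
  using nn
proof (rule AE_mp, intro AE_I2 impI)
  fix x assume h: "\<forall>i\<in>{1..n+1}. 0 \<le> X i x"
  show "0 \<le> S x \<and> (\<forall>i\<in>{1..n}. X i x \<le> S x)"
    unfolding S_def using h
    by (auto intro!: sum_nonneg member_le_sum)
qed


lemma exch: assumes i: "i \<in> {1..n}"
  shows "(\<integral>x. X i x * indicator A x \<partial>M) = (\<integral>x. X 1 x * indicator A x \<partial>M)"
proof -
  let ?I = "{1..n+1}"
  define \<sigma> where "\<sigma> j = (if j = 1 then i else if j = i then 1 else j)" for j :: nat
  define h where "h \<omega> = \<omega> 1 * (if (\<Sum>j=1..n. \<omega> j) \<le> T \<and> T < (\<Sum>j=1..n. \<omega> j) + \<omega> (n+1) then 1 else 0)"
    for \<omega> :: "nat \<Rightarrow> real"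
  have hm: "h \<in> borel_measurable (PiM ?I (\<lambda>_. borel))"
    unfolding h_def using n by measurable
  have invol: "\<sigma> (\<sigma> j) = j" for j unfolding \<sigma>_def by auto
  have sI: "\<sigma> \<in> ?I \<rightarrow> ?I" using i n unfolding \<sigma>_def by auto
  have sn: "\<sigma> \<in> {1..n} \<rightarrow> {1..n}" using i n unfolding \<sigma>_def by auto
  have inj: "inj_on \<sigma> ?I" by (metis inj_onI invol)
  have bij: "bij_betw \<sigma> {1..n} {1..n}"
    by (rule bij_betwI[where g=\<sigma>]) (use sn invol in auto)
  have s1: "\<sigma> 1 = i" and sn1: "\<sigma> (n+1) = n+1" using i unfolding \<sigma>_def by auto
  have PI: "(\<integral>x. h (\<lambda>j\<in>?I. X (\<sigma> j) x) \<partial>M) = (\<integral>x. h (\<lambda>j\<in>?I. X j x) \<partial>M)"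
    by (rule perm_invariant[OF _ _ ind rv D inj sI hm]) auto
  have e1: "h (\<lambda>j\<in>?I. X j x) = X 1 x * indicator A x" if x: "x \<in> space M" for x
  proof -
    have "(\<Sum>j=1..n. (\<lambda>j\<in>?I. X j x) j) = S x" unfolding S_def by (intro sum.cong) auto
    then show ?thesis using x n unfolding h_def A_def by (auto simp: indicator_def)
  qed
  have e2: "h (\<lambda>j\<in>?I. X (\<sigma> j) x) = X i x * indicator A x" if x: "x \<in> space M" for x
  proof -
    have "(\<Sum>j=1..n. (\<lambda>j\<in>?I. X (\<sigma> j) x) j) = (\<Sum>j=1..n. X (\<sigma> j) x)" by (intro sum.cong) auto
    also have "\<dots> = S x" unfolding S_def by (rule sum.reindex_bij_betw[OF bij])
    finally show ?thesis using x n s1 sn1 unfolding h_def A_def by (auto simp: indicator_def)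
  qed
  have "(\<integral>x. X i x * indicator A x \<partial>M) = (\<integral>x. h (\<lambda>j\<in>?I. X (\<sigma> j) x) \<partial>M)"
    by (rule Bochner_Integration.integral_cong[OF refl e2[symmetric]])
  also have "\<dots> = (\<integral>x. h (\<lambda>j\<in>?I. X j x) \<partial>M)" by (rule PI)
  also have "\<dots> = (\<integral>x. X 1 x * indicator A x \<partial>M)"
    by (rule Bochner_Integration.integral_cong[OF refl e1])
  finally show ?thesis .
qed


lemma bnd_on_A: "AE x in M. x \<in> A \<longrightarrow> 0 \<le> S x \<and> S x \<le> T \<and> (\<forall>i\<in>{1..n}. 0 \<le> X i x \<and> X i x \<le> S x \<and> X i x \<le> T)"
  using nn nnS
proof eventually_elim
  case (elim x)
  show ?case
  proof
    assume xA: "x \<in> A"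
    then have ST: "S x \<le> T" by (simp add: A_def)
    have "\<forall>i\<in>{1..n}. 0 \<le> X i x \<and> X i x \<le> S x \<and> X i x \<le> T"
    proof
      fix i assume i: "i \<in> {1..n}"
      then have "X i x \<le> S x" "0 \<le> X i x" using elim by auto
      then show "0 \<le> X i x \<and> X i x \<le> S x \<and> X i x \<le> T" using ST by linarith
    qed
    then show "0 \<le> S x \<and> S x \<le> T \<and> (\<forall>i\<in>{1..n}. 0 \<le> X i x \<and> X i x \<le> S x \<and> X i x \<le> T)"
      using elim ST by simp
  qed
qed

lemma intXA: assumes i: "i \<in> {1..n}" shows "integrable M (\<lambda>x. X i x * indicator A x)"
proof (rule integrable_const_bound[where B=T])
  show "AE x in M. norm (X i x * indicator A x) \<le> T"
    using bnd_on_A by eventually_elim (use i T in \<open>auto simp: indicator_def\<close>)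
qed measurable

lemma intSA: "integrable M (\<lambda>x. S x * indicator A x)"
proof (rule integrable_const_bound[where B=T])
  show "AE x in M. norm (S x * indicator A x) \<le> T"
    using bnd_on_A by eventually_elim (use T in \<open>auto simp: indicator_def\<close>)
qed measurable

lemma intA: "integrable M (\<lambda>x. (c::real) * indicator A x)"
  by (rule integrable_const_bound[where B="\<bar>c\<bar>"]) (auto simp: indicator_def)

lemma intB: "B \<in> sets M \<Longrightarrow> integrable M (\<lambda>x. (c::real) * indicator B x)"
  by (rule integrable_const_bound[where B="\<bar>c\<bar>"]) (auto simp: indicator_def)

lemma int_cA: "(\<integral>x. c * indicator B x \<partial>M) = c * prob B" if "B \<in> sets M"
  using that by (simp add: Int_absorb2 sets.sets_into_space)

lemma sumS: "(\<integral>x. S x * indicator A x \<partial>M) = real n * (\<integral>x. X 1 x * indicator A x \<partial>M)"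
proof -
  have "(\<integral>x. S x * indicator A x \<partial>M) = (\<integral>x. (\<Sum>i=1..n. X i x * indicator A x) \<partial>M)"
    by (simp add: S_def sum_distrib_right)
  also have "\<dots> = (\<Sum>i=1..n. (\<integral>x. X i x * indicator A x \<partial>M))"
    by (rule Bochner_Integration.integral_sum[where I="{1..n}" and f="\<lambda>i x. X i x * indicator A x"]) (use intXA in auto)
  also have "\<dots> = (\<Sum>i=1..n. (\<integral>x. X 1 x * indicator A x \<partial>M))"
    by (rule sum.cong[OF refl], rule exch) simp
  finally show ?thesis by simp
qed

lemma S_nonneg: "0 \<le> (\<integral>x. S x * indicator A x \<partial>M)"
  by (rule integral_nonneg_AE) (use bnd_on_A in \<open>eventually_elim, auto simp: indicator_def\<close>)

lemma S_le: "(\<integral>x. S x * indicator A x \<partial>M) \<le> T * prob A"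
proof -
  have "(\<integral>x. S x * indicator A x \<partial>M) \<le> (\<integral>x. T * indicator A x \<partial>M)"
    by (rule integral_mono_AE[OF intSA intA]) (use bnd_on_A in \<open>eventually_elim, auto simp: indicator_def\<close>)
  then show ?thesis by (simp add: int_cA)
qed

lemma var_le: assumes c: "0 \<le> c"
  shows "(\<integral>x. (X 1 x - c)\<^sup>2 * indicator A x \<partial>M) \<le> T * (\<integral>x. X 1 x * indicator A x \<partial>M) + c\<^sup>2 * prob A"
proof -
  have i1: "1 \<in> {1..n}" using n by auto
  have "(\<integral>x. (X 1 x - c)\<^sup>2 * indicator A x \<partial>M) \<le> (\<integral>x. T * (X 1 x * indicator A x) + c\<^sup>2 * indicator A x \<partial>M)"
  proof (rule integral_mono_AE)
    show "integrable M (\<lambda>x. (X 1 x - c)\<^sup>2 * indicator A x)"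
    proof (rule integrable_const_bound[where B="(T + c)\<^sup>2"])
      show "AE x in M. norm ((X 1 x - c)\<^sup>2 * indicator A x) \<le> (T + c)\<^sup>2"
        using bnd_on_A
      proof eventually_elim
        case (elim x)
        show ?case
        proof (cases "x \<in> A")
          case True
          with elim i1 have "0 \<le> X 1 x" "X 1 x \<le> T" by auto
          then have "\<bar>X 1 x - c\<bar> \<le> T + c" using c by auto
          then have "(X 1 x - c)\<^sup>2 \<le> (T + c)\<^sup>2"
            by (metis abs_le_square_iff abs_of_nonneg add_nonneg_nonneg c T less_imp_le abs_ge_zero order_trans)
          then show ?thesis using True by simp
        qed simp
      qed
    qed measurable
    show "integrable M (\<lambda>x. T * (X 1 x * indicator A x) + c\<^sup>2 * indicator A x)"
      using intXA[OF i1] intA by auto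
    show "AE x in M. (X 1 x - c)\<^sup>2 * indicator A x \<le> T * (X 1 x * indicator A x) + c\<^sup>2 * indicator A x"
      using bnd_on_A
    proof eventually_elim
      case (elim x)
      show ?case
      proof (cases "x \<in> A")
        case True
        with elim i1 have h: "0 \<le> X 1 x" "X 1 x \<le> T" by auto
        have q1: "X 1 x * X 1 x \<le> T * X 1 x" using h by (simp add: mult_right_mono)
        have q2: "0 \<le> X 1 x * c" using h c by simp
        have q3: "(X 1 x - c)\<^sup>2 = X 1 x * X 1 x - 2 * (X 1 x * c) + c\<^sup>2"
          by (simp add: power2_eq_square algebra_simps)
        have "(X 1 x - c)\<^sup>2 \<le> T * X 1 x + c\<^sup>2"
          using q1 q2 q3 by linarith
        then show ?thesis using True by simp
      qed simp
    qed
  qed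
  also have "\<dots> = T * (\<integral>x. X 1 x * indicator A x \<partial>M) + c\<^sup>2 * prob A"
    using intXA[OF i1] intA by (simp add: int_cA)
  finally show ?thesis .
qed

lemma var_nonneg: "0 \<le> (\<integral>x. (X 1 x - c)\<^sup>2 * indicator A x \<partial>M)"
  by (rule Bochner_Integration.integral_nonneg) auto

lemma TS_eq: "(\<integral>x. (T - S x) * indicator A x \<partial>M) = T * prob A - (\<integral>x. S x * indicator A x \<partial>M)"
proof -
  have "(\<integral>x. (T - S x) * indicator A x \<partial>M) = (\<integral>x. T * indicator A x - S x * indicator A x \<partial>M)"
    by (simp add: algebra_simps)
  also have "\<dots> = T * prob A - (\<integral>x. S x * indicator A x \<partial>M)"
    using intA intSA by (simp add: int_cA)
  finally show ?thesis .
qed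

lemma TS_le: assumes d: "0 < \<delta>"
  shows "(\<integral>x. (T - S x) * indicator A x \<partial>M) \<le> \<delta> * prob A + T * prob {x\<in>space M. S x \<le> T - \<delta>}"
proof -
  let ?B = "{x\<in>space M. S x \<le> T - \<delta>}"
  have B: "?B \<in> sets M" by measurable
  have "(\<integral>x. (T - S x) * indicator A x \<partial>M) \<le> (\<integral>x. \<delta> * indicator A x + T * indicator ?B x \<partial>M)"
  proof (rule integral_mono_AE)
    show "integrable M (\<lambda>x. (T - S x) * indicator A x)"
      using intA intSA by (simp add: left_diff_distrib)
    show "integrable M (\<lambda>x. \<delta> * indicator A x + T * indicator ?B x)"
      using intA intB[OF B] by auto
    show "AE x in M. (T - S x) * indicator A x \<le> \<delta> * indicator A x + T * indicator ?B x"
      using bnd_on_A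
    proof eventually_elim
      case (elim x)
      show ?case
      proof (cases "x \<in> A")
        case False
        then show ?thesis using d T by (simp add: indicator_def)
      next
        case True
        with elim have s: "0 \<le> S x" "S x \<le> T" by auto
        have xs: "x \<in> space M" using True by (simp add: A_def)
        show ?thesis
        proof (cases "S x \<le> T - \<delta>")
          case True
          then have "x \<in> ?B" using xs by simp
          then show ?thesis using \<open>x \<in> A\<close> s d T by (simp add: indicator_def)
        next
          case False
          then have "x \<notin> ?B" by simp
          then show ?thesis using \<open>x \<in> A\<close> False s d T by (simp add: indicator_def)
        qed
      qed
    qed
  qed
  also have "\<dots> = \<delta> * prob A + T * prob ?B"
    using intA intB[OF B] B by (simp add: int_cA)
  finally show ?thesis .
qed


lemma Ssum: "(\<Sum>i=1..n+1. X i x) = S x + X (n+1) x"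
  unfolding S_def by simp

lemma int_ind: assumes f[measurable]: "f \<in> borel_measurable M" and B[measurable]: "B \<in> sets borel"
  shows "(\<integral>x. indicator B (f x) \<partial>M) = prob {x\<in>space M. f x \<in> B}"
proof -
  have "(\<integral>x. indicator B (f x) \<partial>M) = (\<integral>x. indicator {x\<in>space M. f x \<in> B} x \<partial>M)"
    by (rule Bochner_Integration.integral_cong) (auto simp: indicator_def)
  also have "\<dots> = prob {x\<in>space M. f x \<in> B}"
    by (simp add: Int_absorb2)
  finally show ?thesis .
qed

lemma F_mono: "s \<le> t \<Longrightarrow> F s \<le> F t"
proof -
  assume st: "s \<le> t"
  have "measure M {x\<in>space M. X 1 x \<le> s} \<le> measure M {x\<in>space M. X 1 x \<le> t}"
    by (rule finite_measure_mono) (use st in auto)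
  then show ?thesis using cdf[of 1] n by auto
qed

lemma F_compl: assumes i: "i \<in> {1..n+1}" shows "prob {x\<in>space M. t < X i x} = 1 - F t"
proof -
  have "{x\<in>space M. t < X i x} = space M - {x\<in>space M. X i x \<le> t}" by auto
  then show ?thesis using prob_compl[of "{x\<in>space M. X i x \<le> t}"] cdf[OF i] by simp
qed

lemma F8: assumes d: "0 < \<delta>"
  shows "prob {x\<in>space M. T - \<delta> < S x \<and> S x \<le> T} * (1 - F \<delta>) \<le> prob A"
proof -
  have "indep_var borel (X (n+1)) borel (\<lambda>\<omega>. \<Sum>i\<in>{1..n}. X i \<omega>)"
    by (rule indep_vars_sum) (use ind in \<open>auto simp: atLeastAtMostSuc_conv\<close>)
  then have iv: "indep_var borel (X (n+1)) borel S" by (simp add: S_def[abs_def])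
  have "prob ((\<lambda>x. (X (n+1) x, S x)) -` ({\<delta><..} \<times> {T-\<delta><..T}) \<inter> space M)
     = prob (X (n+1) -` {\<delta><..} \<inter> space M) * prob (S -` {T-\<delta><..T} \<inter> space M)"
    by (rule indep_varD[OF iv]) auto
  moreover have "prob (X (n+1) -` {\<delta><..} \<inter> space M) = 1 - F \<delta>"
    using F_compl[of "n+1" \<delta>] by (simp add: vimage_def Int_def conj_commute)
  moreover have "prob (S -` {T-\<delta><..T} \<inter> space M) = prob {x\<in>space M. T - \<delta> < S x \<and> S x \<le> T}"
    by (rule arg_cong[where f=prob]) auto
  moreover have "prob ((\<lambda>x. (X (n+1) x, S x)) -` ({\<delta><..} \<times> {T-\<delta><..T}) \<inter> space M) \<le> prob A"
    by (rule finite_measure_mono) (auto simp: A_def)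
  ultimately show ?thesis by (simp add: mult.commute)
qed

lemma F10: "prob {x\<in>space M. S x \<le> T} = prob {x\<in>space M. S x \<le> T - \<delta>} + prob {x\<in>space M. T - \<delta> < S x \<and> S x \<le> T}" if d: "0 < \<delta>"
proof -
  have "{x\<in>space M. S x \<le> T} = {x\<in>space M. S x \<le> T - \<delta>} \<union> {x\<in>space M. T - \<delta> < S x \<and> S x \<le> T}"
    using d by auto
  moreover have "prob ({x\<in>space M. S x \<le> T - \<delta>} \<union> {x\<in>space M. T - \<delta> < S x \<and> S x \<le> T})
     = prob {x\<in>space M. S x \<le> T - \<delta>} + prob {x\<in>space M. T - \<delta> < S x \<and> S x \<le> T}"
    by (rule finite_measure_Union) (measurable, auto)
  ultimately show ?thesis by simp
qed

lemma Flt1: assumes p: "0 < prob A" shows "F (T / real (n+1)) < 1"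
proof -
  let ?t = "T / real (n+1)"
  have sub: "A \<subseteq> (\<Union>i\<in>{1..n+1}. {x\<in>space M. ?t < X i x})"
  proof
    fix x assume xA: "x \<in> A"
    show "x \<in> (\<Union>i\<in>{1..n+1}. {x\<in>space M. ?t < X i x})"
    proof (rule ccontr)
      assume "x \<notin> (\<Union>i\<in>{1..n+1}. {x\<in>space M. ?t < X i x})"
      then have "\<forall>i\<in>{1..n+1}. X i x \<le> ?t" using xA by (auto simp: A_def)
      then have "(\<Sum>i=1..n+1. X i x) \<le> (\<Sum>i=1..n+1. ?t)" by (intro sum_mono) auto
      then have "(\<Sum>i=1..n+1. X i x) \<le> T" by simp
      then have "S x + X (n+1) x \<le> T" by (simp only: Ssum)
      with xA show False by (simp add: A_def)
    qed
  qed
  have "prob A \<le> prob (\<Union>i\<in>{1..n+1}. {x\<in>space M. ?t < X i x})"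
    by (rule finite_measure_mono[OF sub]) measurable
  also have "\<dots> \<le> (\<Sum>i\<in>{1..n+1}. prob {x\<in>space M. ?t < X i x})"
    by (rule finite_measure_subadditive_finite) auto
  also have "\<dots> = (\<Sum>i\<in>{1..n+1}. 1 - F ?t)"
    by (rule sum.cong[OF refl], rule F_compl)
  also have "\<dots> = real (n+1) * (1 - F ?t)" by simp
  finally have "0 < real (n+1) * (1 - F ?t)" using p by linarith
  then show ?thesis by (simp add: zero_less_mult_iff)
qed

lemma Fpos: assumes p: "0 < prob A" shows "0 < F (T / real n)"
proof -
  let ?t = "T / real n"
  have sub: "A \<subseteq> (\<Union>i\<in>{1..n}. {x\<in>space M. X i x \<le> ?t})"
  proof
    fix x assume xA: "x \<in> A"
    show "x \<in> (\<Union>i\<in>{1..n}. {x\<in>space M. X i x \<le> ?t})"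
    proof (rule ccontr)
      assume "x \<notin> (\<Union>i\<in>{1..n}. {x\<in>space M. X i x \<le> ?t})"
      then have h: "\<forall>i\<in>{1..n}. ?t < X i x" using xA by (auto simp: A_def)
      have "(\<Sum>i=1..n. ?t) < (\<Sum>i=1..n. X i x)"
        by (rule sum_strict_mono) (use h n in auto)
      then have "T < S x" using n by (simp add: S_def)
      with xA show False by (simp add: A_def)
    qed
  qed
  have "prob A \<le> prob (\<Union>i\<in>{1..n}. {x\<in>space M. X i x \<le> ?t})"
    by (rule finite_measure_mono[OF sub]) measurable
  also have "\<dots> \<le> (\<Sum>i\<in>{1..n}. prob {x\<in>space M. X i x \<le> ?t})"
    by (rule finite_measure_subadditive_finite) auto
  also have "\<dots> = (\<Sum>i\<in>{1..n}. F ?t)"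
    by (rule sum.cong[OF refl], rule cdf) auto
  also have "\<dots> = real n * F ?t" by simp
  finally have "0 < real n * F ?t" using p by linarith
  then show ?thesis using n by (simp add: zero_less_mult_iff)
qed


lemma int_gcut: "integrable M (\<lambda>x. gcut \<delta> (X i x))" if "0 \<le> \<delta>"
  by (rule integrable_const_bound[where B=\<delta>]) (use that in \<open>auto simp: gcut_nonneg gcut_le\<close>)

lemma mX: assumes i: "i \<in> {1..n+1}" shows "(\<integral>x. gcut \<delta> (X i x) \<partial>M) = (\<integral>y. gcut \<delta> y \<partial>D)"
  using integral_distr[OF rv gcut_meas, of i \<delta>] D[OF i] by simp

lemma F9: assumes d: "0 < \<delta>"
  shows "real n * (\<integral>y. gcut \<delta> y \<partial>D) * prob {x\<in>space M. S x \<le> T - \<delta>} \<le> T * prob {x\<in>space M. S x \<le> T}"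
proof -
  let ?m = "\<integral>y. gcut \<delta> y \<partial>D"
  let ?P = "prob {x\<in>space M. S x \<le> T - \<delta>}"
  have m0: "0 \<le> ?m" using mX[of 1 \<delta>] n by (metis Bochner_Integration.integral_nonneg gcut_nonneg atLeastAtMost_iff le_add2 le_numeral_extra(4))
  have each: "?m * ?P \<le> (\<integral>x. gcut \<delta> (X i x) * indicator {..T} (S x) \<partial>M)" if i: "i \<in> {1..n}" for i
  proof -
    let ?R = "\<lambda>\<omega>. \<Sum>j\<in>{1..n}-{i}. X j \<omega>"
    have Rm[measurable]: "?R \<in> borel_measurable M" by measurable
    have iv: "indep_var borel (X i) borel ?R"
      by (rule indep_vars_sum) (use i in \<open>auto intro: indep_vars_subset[OF ind]\<close>)
    have iv2: "indep_var borel (\<lambda>x. gcut \<delta> (X i x)) borel (\<lambda>x. indicator {..T-\<delta>} (?R x) :: real)"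
      using indep_var_compose[OF iv gcut_meas, of "indicator {..T-\<delta>}" borel] by (simp add: comp_def)
    have intR: "integrable M (\<lambda>x. indicator {..T-\<delta>} (?R x) :: real)"
      by (rule integrable_const_bound[where B=1]) (auto simp: indicator_def)
    have "(\<integral>x. gcut \<delta> (X i x) * indicator {..T-\<delta>} (?R x) \<partial>M)
        = (\<integral>x. gcut \<delta> (X i x) \<partial>M) * (\<integral>x. indicator {..T-\<delta>} (?R x) \<partial>M)"
      by (rule indep_var_lebesgue_integral[OF iv2 int_gcut intR]) (use d in simp)
    also have "\<dots> = ?m * prob {x\<in>space M. ?R x \<in> {..T-\<delta>}}"
      using i by (simp add: mX int_ind)
    finally have e1: "(\<integral>x. gcut \<delta> (X i x) * indicator {..T-\<delta>} (?R x) \<partial>M) = ?m * prob {x\<in>space M. ?R x \<in> {..T-\<delta>}}" .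
    have SR: "S x = ?R x + X i x" for x
      unfolding S_def using i sum.remove[of "{1..n}" i "\<lambda>j. X j x"] by (simp add: add.commute)
    have nni: "AE x in M. 0 \<le> X i x" using i by (intro nn_i) auto
    have "?P \<le> prob {x\<in>space M. ?R x \<in> {..T-\<delta>}}"
    proof (rule finite_measure_mono_AE)
      show "AE x in M. x \<in> {x\<in>space M. S x \<le> T - \<delta>} \<longrightarrow> x \<in> {x\<in>space M. ?R x \<in> {..T-\<delta>}}"
        using nni
      proof (elim AE_mp, intro AE_I2 impI)
        fix x assume "0 \<le> X i x" "x \<in> {x\<in>space M. S x \<le> T - \<delta>}"
        then show "x \<in> {x\<in>space M. ?R x \<in> {..T-\<delta>}}" using SR[of x] by auto
      qed
    qed measurable
    then have "?m * ?P \<le> ?m * prob {x\<in>space M. ?R x \<in> {..T-\<delta>}}" using m0 by (rule mult_left_mono)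
    also have "\<dots> = (\<integral>x. gcut \<delta> (X i x) * indicator {..T-\<delta>} (?R x) \<partial>M)" using e1 by simp
    also have "\<dots> \<le> (\<integral>x. gcut \<delta> (X i x) * indicator {..T} (S x) \<partial>M)"
    proof (rule integral_mono)
      show "integrable M (\<lambda>x. gcut \<delta> (X i x) * indicator {..T-\<delta>} (?R x))"
        by (rule integrable_const_bound[where B=\<delta>]) (use d in \<open>auto simp: indicator_def gcut_nonneg gcut_le\<close>)
      show "integrable M (\<lambda>x. gcut \<delta> (X i x) * indicator {..T} (S x))"
        by (rule integrable_const_bound[where B=\<delta>]) (use d in \<open>auto simp: indicator_def gcut_nonneg gcut_le\<close>)
      fix x
      show "gcut \<delta> (X i x) * indicator {..T-\<delta>} (?R x) \<le> gcut \<delta> (X i x) * indicator {..T} (S x)"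
      proof (cases "gcut \<delta> (X i x) = 0")
        case False
        then have "0 \<le> X i x \<and> X i x \<le> \<delta>" by (rule gcut_nz)
        then show ?thesis using SR[of x] gcut_nonneg[of \<delta> "X i x"] by (auto simp: indicator_def)
      qed simp
    qed
    finally show ?thesis .
  qed
  have "real n * ?m * ?P = (\<Sum>i=1..n. ?m * ?P)" by simp
  also have "\<dots> \<le> (\<Sum>i=1..n. (\<integral>x. gcut \<delta> (X i x) * indicator {..T} (S x) \<partial>M))"
    by (rule sum_mono) (rule each)
  also have "\<dots> = (\<integral>x. (\<Sum>i=1..n. gcut \<delta> (X i x)) * indicator {..T} (S x) \<partial>M)"
  proof -
    have "(\<integral>x. (\<Sum>i=1..n. gcut \<delta> (X i x)) * indicator {..T} (S x) \<partial>M)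
        = (\<integral>x. (\<Sum>i=1..n. gcut \<delta> (X i x) * indicator {..T} (S x)) \<partial>M)"
      by (simp add: sum_distrib_right)
    also have "\<dots> = (\<Sum>i=1..n. (\<integral>x. gcut \<delta> (X i x) * indicator {..T} (S x) \<partial>M))"
      by (rule Bochner_Integration.integral_sum[where I="{1..n}" and f="\<lambda>i x. gcut \<delta> (X i x) * indicator {..T} (S x)"])
         (rule integrable_const_bound[where B=\<delta>], use d in \<open>auto simp: indicator_def gcut_nonneg gcut_le\<close>)
    finally show ?thesis by simp
  qed
  also have "\<dots> \<le> (\<integral>x. T * indicator {..T} (S x) \<partial>M)"
  proof (rule integral_mono_AE)
    show "integrable M (\<lambda>x. (\<Sum>i=1..n. gcut \<delta> (X i x)) * indicator {..T} (S x))"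
    proof (rule integrable_const_bound[where B="real n * \<delta>"])
      have sb: "(\<Sum>i=1..n. gcut \<delta> (X i x)) \<le> (\<Sum>i=1..n. \<delta>)" for x
        by (rule sum_mono) (use d in \<open>simp add: gcut_le\<close>)
      have s0: "0 \<le> (\<Sum>i=1..n. gcut \<delta> (X i x))" for x by (simp add: sum_nonneg gcut_nonneg)
      show "AE x in M. norm ((\<Sum>i=1..n. gcut \<delta> (X i x)) * indicator {..T} (S x)) \<le> real n * \<delta>"
        using sb s0 d by (auto simp: indicator_def)
    qed measurable
    show "integrable M (\<lambda>x. T * indicator {..T} (S x))"
      by (rule integrable_const_bound[where B=T]) (use T in \<open>auto simp: indicator_def\<close>)
    show "AE x in M. (\<Sum>i=1..n. gcut \<delta> (X i x)) * indicator {..T} (S x) \<le> T * indicator {..T} (S x)"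
      using nn
    proof (elim AE_mp, intro AE_I2 impI)
      fix x assume h: "\<forall>i\<in>{1..n+1}. 0 \<le> X i x"
      have "(\<Sum>i=1..n. gcut \<delta> (X i x)) \<le> S x"
        unfolding S_def by (rule sum_mono) (use h in \<open>auto intro: gcut_le_y\<close>)
      then show "(\<Sum>i=1..n. gcut \<delta> (X i x)) * indicator {..T} (S x) \<le> T * indicator {..T} (S x)"
        by (auto simp: indicator_def)
    qed
  qed
  also have "\<dots> = T * prob {x\<in>space M. S x \<le> T}"
    using int_ind[OF S_meas, of "{..T}"] by simp
  finally show ?thesis .
qed

lemma m_pos: assumes d: "0 < \<delta>" and Fd: "0 < F \<delta>" shows "0 < (\<integral>y. gcut \<delta> y \<partial>D)"
proof -
  have i1: "1 \<in> {1..n+1}" by simp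
  have eq: "(\<integral>x. gcut \<delta> (X 1 x) \<partial>M) = (\<integral>y. gcut \<delta> y \<partial>D)" by (rule mX[OF i1])
  have nonneg: "0 \<le> (\<integral>x. gcut \<delta> (X 1 x) \<partial>M)" by (simp add: gcut_nonneg)
  have "(\<integral>x. gcut \<delta> (X 1 x) \<partial>M) \<noteq> 0"
  proof
    assume z: "(\<integral>x. gcut \<delta> (X 1 x) \<partial>M) = 0"
    have ae: "AE x in M. gcut \<delta> (X 1 x) = 0"
      using integral_nonneg_eq_0_iff_AE[OF int_gcut] z d by (simp add: gcut_nonneg)
    have "F \<delta> = prob {x\<in>space M. X 1 x \<le> \<delta>}" using cdf[OF i1] by simp
    also have "\<dots> \<le> prob {x\<in>space M. X 1 x \<in> {0}}"
    proof (rule finite_measure_mono_AE)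
      show "AE x in M. x \<in> {x\<in>space M. X 1 x \<le> \<delta>} \<longrightarrow> x \<in> {x\<in>space M. X 1 x \<in> {0}}"
        using ae nn_i[OF i1]
      proof (elim AE_mp, intro AE_I2 impI)
        fix x assume "0 \<le> X 1 x" "gcut \<delta> (X 1 x) = 0" "x \<in> {x\<in>space M. X 1 x \<le> \<delta>}"
        then show "x \<in> {x\<in>space M. X 1 x \<in> {0}}" by (auto simp: gcut_def)
      qed
    qed measurable
    also have "\<dots> = measure (distr M borel (X 1)) {0}"
      by (subst measure_distr) (auto simp: vimage_def Int_def conj_commute)
    also have "\<dots> = 0" using D[OF i1] D0 by (simp add: measure_def)
    finally show False using Fd by simp
  qed
  then show ?thesis using nonneg eq by simp
qed


definition "mu = (\<integral>x. X 1 x * indicator A x \<partial>M) / prob A"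

lemma mu_facts: assumes p: "0 < prob A"
  shows "0 \<le> mu" "real n * mu \<le> T"
    "0 \<le> (\<integral>x. (X 1 x - mu)\<^sup>2 * indicator A x \<partial>M) / prob A"
    "(\<integral>x. (X 1 x - mu)\<^sup>2 * indicator A x \<partial>M) / prob A \<le> T * mu + mu\<^sup>2"
proof -
  have e: "real n * mu = (\<integral>x. S x * indicator A x \<partial>M) / prob A"
    unfolding mu_def sumS by simp
  have sn: "0 \<le> (\<integral>x. X 1 x * indicator A x \<partial>M)"
    using S_nonneg sumS n by (simp add: zero_le_mult_iff)
  show m0: "0 \<le> mu" unfolding mu_def using sn p by simp
  show "real n * mu \<le> T" unfolding e using S_le p by (simp add: pos_divide_le_eq)
  show "0 \<le> (\<integral>x. (X 1 x - mu)\<^sup>2 * indicator A x \<partial>M) / prob A"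
    using var_nonneg p by simp
  have "(\<integral>x. (X 1 x - mu)\<^sup>2 * indicator A x \<partial>M) \<le> T * (\<integral>x. X 1 x * indicator A x \<partial>M) + mu\<^sup>2 * prob A"
    by (rule var_le[OF m0])
  also have "(\<integral>x. X 1 x * indicator A x \<partial>M) = mu * prob A" unfolding mu_def using p by simp
  finally show "(\<integral>x. (X 1 x - mu)\<^sup>2 * indicator A x \<partial>M) / prob A \<le> T * mu + mu\<^sup>2"
    using p by (simp add: pos_divide_le_eq algebra_simps)
qed

lemma conv_bound: assumes p: "0 < prob A" and d: "0 < \<delta>" and k: "0 < \<kappa>" and kF: "\<kappa> \<le> 1 - F \<delta>"
  and Q: "T < real n * (\<integral>y. gcut \<delta> y \<partial>D)"
  shows "T - real n * mu \<le> \<delta> + T\<^sup>2 / (\<kappa> * (real n * (\<integral>y. gcut \<delta> y \<partial>D) - T))"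
proof (rule arith1[OF p k _ less_imp_le[OF T] _ _ _ _ _])
  let ?m = "\<integral>y. gcut \<delta> y \<partial>D"
  let ?a = "prob {x\<in>space M. S x \<le> T - \<delta>}"
  let ?b = "prob {x\<in>space M. T - \<delta> < S x \<and> S x \<le> T}"
  show "0 < real n * ?m - T" using Q by simp
  show "0 \<le> ?a" "0 \<le> ?b" by simp_all
  have "(T - real n * mu) * prob A = T * prob A - (\<integral>x. S x * indicator A x \<partial>M)"
    unfolding mu_def sumS using p by (simp add: algebra_simps)
  also have "\<dots> = (\<integral>x. (T - S x) * indicator A x \<partial>M)" by (rule TS_eq[symmetric])
  also have "\<dots> \<le> \<delta> * prob A + T * ?a" by (rule TS_le[OF d])
  finally show "(T - real n * mu) * prob A \<le> \<delta> * prob A + T * ?a" .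
  have "real n * ?m * ?a \<le> T * (?a + ?b)" using F9[OF d] F10[OF d] by simp
  then show "?a * (real n * ?m - T) \<le> T * ?b" by (simp add: algebra_simps)
  have "?b * \<kappa> \<le> ?b * (1 - F \<delta>)" using kF by (simp add: mult_left_mono)
  also have "\<dots> \<le> prob A" by (rule F8[OF d])
  finally show "?b * \<kappa> \<le> prob A" .
qed

end


lemma arith2:
  fixes \<kappa> \<epsilon> Q T :: real
  assumes k: "0 < \<kappa>" and e: "0 < \<epsilon>" and Q: "2 * T\<^sup>2 / (\<kappa> * \<epsilon>) < Q"
  shows "T\<^sup>2 / (\<kappa> * Q) < \<epsilon> / 2"
proof -
  have ke: "0 < \<kappa> * \<epsilon>" using k e by simp
  have "2 * T\<^sup>2 < Q * (\<kappa> * \<epsilon>)" using Q ke by (simp add: divide_less_eq)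
  moreover have Q0: "0 < Q" using Q ke by (smt (verit) divide_nonneg_pos zero_le_power2 mult_nonneg_nonneg)
  ultimately have "T\<^sup>2 < \<epsilon> / 2 * (\<kappa> * Q)" by (simp add: algebra_simps)
  then show ?thesis using k Q0 by (simp add: divide_less_eq)
qed


theorem lemma4p3:
  fixes M :: "'a measure" and F f :: "real \<Rightarrow> real" and T :: real
    and \<xi> :: "nat \<Rightarrow> nat \<Rightarrow> 'a \<Rightarrow> real"
  assumes "prob_space M"
    and f_nonneg: "\<forall>t. 0 \<le> f t"
    and dens: "\<forall>n\<ge>1. \<forall>i\<in>{1..n+1}. distributed M lborel (\<xi> n i) (\<lambda>s. ennreal (f s))"
    and cdf: "\<forall>n\<ge>1. \<forall>i\<in>{1..n+1}. \<forall>t. measure M {x \<in> space M. \<xi> n i x \<le> t} = F t"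
    and nonneg: "\<forall>t<0. F t = 0"
    and finite_mean: "set_integrable lborel {0..} (\<lambda>t. 1 - F t)"
    and T: "0 < T"
    and indep: "\<forall>n\<ge>1. prob_space.indep_vars M (\<lambda>_. borel) (\<xi> n) {1..n+1}"
    and pos: "\<forall>n\<ge>1. 0 < measure M (renewal_event M \<xi> T n)"
  shows "(\<lambda>n. cond_event_exp M (renewal_event M \<xi> T n) (\<xi> n 1)) \<longlonglongrightarrow> 0
       \<and> (\<lambda>n. cond_event_exp M (renewal_event M \<xi> T n)
               (\<lambda>x. (\<xi> n 1 x - cond_event_exp M (renewal_event M \<xi> T n) (\<xi> n 1))\<^sup>2))
            \<longlonglongrightarrow> 0
       \<and> (\<lambda>n. real n * cond_event_exp M (renewal_event M \<xi> T n) (\<xi> n 1)) \<longlonglongrightarrow> T"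
  proof -
  interpret P: prob_space M by fact
  define D where "D = density lborel (\<lambda>s. ennreal (f s))"
  define Y where "Y n i = (if i \<in> {1..n+1} then \<xi> n i else (\<lambda>_. 0::real))" for n i
  have fm: "(\<lambda>s. ennreal (f s)) \<in> borel_measurable lborel"
    using dens[rule_format, of 1 1] by (simp add: distributed_def)
  have D0: "emeasure D {0} = 0"
  proof -
    have "AE x in lborel. x \<in> {0::real} \<longrightarrow> ennreal (f x) = 0"
      using AE_lborel_singleton[of "0::real"] by eventually_elim auto
    then have "{0} \<in> null_sets D" unfolding D_def
      by (subst null_sets_density_iff[OF fm]) auto
    then show ?thesis by auto
  qed
  have rowY: "row M (Y n) n T F D" if n: "1 \<le> n" for n
  proof -
    have rv: "Y n i \<in> borel_measurable M" for i
      using dens[rule_format, OF n, of i] by (auto simp: Y_def distributed_def)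
    show ?thesis
    proof (unfold_locales)
      show "1 \<le> n" "0 < T" by fact+
      show "Y n i \<in> borel_measurable M" for i by (rule rv)
      show "P.indep_vars (\<lambda>_. borel) (Y n) {1..n+1}"
        using indep[rule_format, OF n] by (subst P.indep_vars_cong[OF refl, where Y="\<xi> n"]) (auto simp: Y_def)
      show "distr M borel (Y n i) = D" if i: "i \<in> {1..n+1}" for i
      proof -
        have "distr M borel (Y n i) = distr M lborel (\<xi> n i)"
          using i by (intro distr_cong) (auto simp: Y_def)
        also have "\<dots> = D" unfolding D_def using dens[rule_format, OF n i] by (simp add: distributed_def)
        finally show ?thesis .
      qed
      show "measure M {x\<in>space M. Y n i x \<le> t} = F t" if i: "i \<in> {1..n+1}" for i t
        using cdf[rule_format, OF n i] i by (simp add: Y_def)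
      show "F t = 0" if "t < 0" for t using nonneg that by auto
      show "emeasure D {0} = 0" by (rule D0)
    qed
  qed
  have A_eq: "renewal_event M \<xi> T n = row.A M (Y n) n T" if n: "1 \<le> n" for n
  proof -
    have s1: "(\<Sum>i=1..n. \<xi> n i x) = row.S (Y n) n x" for x
      unfolding row.S_def[OF rowY[OF n]] by (intro sum.cong) (auto simp: Y_def)
    have s2: "(\<Sum>i=1..n+1. \<xi> n i x) = row.S (Y n) n x + Y n (n+1) x" for x
      using s1[of x] by (simp add: Y_def)
    show ?thesis unfolding renewal_event_def row.A_def[OF rowY[OF n]] s1 s2 ..
  qed
  define \<mu> where "\<mu> n = cond_event_exp M (renewal_event M \<xi> T n) (\<xi> n 1)" for n
  define V where "V n = cond_event_exp M (renewal_event M \<xi> T n) (\<lambda>x. (\<xi> n 1 x - \<mu> n)\<^sup>2)" for n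
  have mu_eq: "\<mu> n = row.mu M (Y n) n T" if n: "1 \<le> n" for n
    unfolding \<mu>_def cond_event_exp_def row.mu_def[OF rowY[OF n]] A_eq[OF n] by (simp add: Y_def)
  have V_eq: "V n = (\<integral>x. (Y n 1 x - row.mu M (Y n) n T)\<^sup>2 * indicator (row.A M (Y n) n T) x \<partial>M) / measure M (row.A M (Y n) n T)"
    if n: "1 \<le> n" for n
    unfolding V_def cond_event_exp_def mu_eq[OF n] A_eq[OF n] by (simp add: Y_def)
  have posA: "0 < measure M (row.A M (Y n) n T)" if n: "1 \<le> n" for n
    using pos[rule_format, OF n] A_eq[OF n] by simp
  have F1: "0 \<le> \<mu> n \<and> real n * \<mu> n \<le> T \<and> 0 \<le> V n \<and> V n \<le> T * \<mu> n + (\<mu> n)\<^sup>2" if n: "1 \<le> n" for n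
    using row.mu_facts[OF rowY[OF n] posA[OF n]] mu_eq[OF n] V_eq[OF n] by simp
  have ev: "eventually (\<lambda>n. 1 \<le> n) sequentially" by (rule eventually_ge_at_top)
  have lim1: "\<mu> \<longlonglongrightarrow> 0"
  proof (rule tendsto_sandwich[of "\<lambda>_. 0" _ _ "\<lambda>n. T / real n"])
    show "eventually (\<lambda>n. 0 \<le> \<mu> n) sequentially" using ev by eventually_elim (use F1 in auto)
    show "eventually (\<lambda>n. \<mu> n \<le> T / real n) sequentially"
      using ev by eventually_elim (use F1 in \<open>auto simp: pos_le_divide_eq mult.commute\<close>)
    show "(\<lambda>n. T / real n) \<longlonglongrightarrow> 0" by (rule lim_const_over_n)
  qed simp
  have lim2: "V \<longlonglongrightarrow> 0"
  proof (rule tendsto_sandwich[of "\<lambda>_. 0" _ _ "\<lambda>n. T * \<mu> n + (\<mu> n)\<^sup>2"])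
    show "eventually (\<lambda>n. 0 \<le> V n) sequentially" using ev by eventually_elim (use F1 in auto)
    show "eventually (\<lambda>n. V n \<le> T * \<mu> n + (\<mu> n)\<^sup>2) sequentially"
      using ev by eventually_elim (use F1 in auto)
    show "(\<lambda>n. T * \<mu> n + (\<mu> n)\<^sup>2) \<longlonglongrightarrow> 0"
      using tendsto_add[OF tendsto_mult[OF tendsto_const lim1] tendsto_power[OF lim1, of 2]] by simp
  qed simp
  have lim3: "(\<lambda>n. real n * \<mu> n) \<longlonglongrightarrow> T"
  proof (rule LIMSEQ_I)
    fix \<epsilon> :: real assume e: "0 < \<epsilon>"
    interpret R1: row M "Y 1" 1 T F D by (rule rowY) simp
    have FT2: "F (T / 2) < 1" using R1.Flt1 posA[of 1] by simp
    define \<delta> where "\<delta> = min (\<epsilon> / 2) (T / 2)"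
    have d: "0 < \<delta>" using e T by (simp add: \<delta>_def)
    define \<kappa> where "\<kappa> = 1 - F (T / 2)"
    have k: "0 < \<kappa>" using FT2 by (simp add: \<kappa>_def)
    have kF: "\<kappa> \<le> 1 - F \<delta>" using R1.F_mono[of \<delta> "T/2"] by (simp add: \<kappa>_def \<delta>_def)
    obtain N where N: "inverse (real (Suc N)) < \<delta> / T" using reals_Archimedean d T by (metis divide_pos_pos)
    interpret RN: row M "Y (Suc N)" "Suc N" T F D by (rule rowY) simp
    have "T / real (Suc N) < \<delta>" using N T by (simp add: field_simps)
    then have "F (T / real (Suc N)) \<le> F \<delta>" by (intro RN.F_mono) simp
    moreover have "0 < F (T / real (Suc N))" using RN.Fpos posA[of "Suc N"] by simp
    ultimately have Fd: "0 < F \<delta>" by simp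
    define m where "m = (\<integral>y. gcut \<delta> y \<partial>D)"
    have m: "0 < m" unfolding m_def by (rule R1.m_pos[OF d Fd])
    define N0 where "N0 = nat \<lceil>(T + 2 * T\<^sup>2 / (\<kappa> * \<epsilon>) + 1) / m\<rceil> + 1"
    show "\<exists>no. \<forall>n\<ge>no. norm (real n * \<mu> n - T) < \<epsilon>"
    proof (intro exI allI impI)
      fix n assume nN: "N0 \<le> n"
      then have n: "1 \<le> n" unfolding N0_def by simp
      interpret R: row M "Y n" n T F D by (rule rowY[OF n])
      have "(T + 2 * T\<^sup>2 / (\<kappa> * \<epsilon>) + 1) / m \<le> real n"
        using nN unfolding N0_def by linarith
      then have Qb: "T + 2 * T\<^sup>2 / (\<kappa> * \<epsilon>) + 1 \<le> real n * m" using m by (simp add: pos_divide_le_eq)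
      have Q: "T < real n * m"
        using Qb k e by (smt (verit) divide_nonneg_pos zero_le_power2 mult_pos_pos)
      have cb: "T - real n * \<mu> n \<le> \<delta> + T\<^sup>2 / (\<kappa> * (real n * m - T))"
        using R.conv_bound[OF posA[OF n] d k kF] Q mu_eq[OF n] unfolding m_def by simp
      have h1: "T\<^sup>2 / (\<kappa> * (real n * m - T)) < \<epsilon> / 2"
        by (rule arith2[OF k e]) (use Qb in simp)
      have h2: "\<delta> \<le> \<epsilon> / 2" by (simp add: \<delta>_def)
      have h3: "real n * \<mu> n \<le> T" using F1[OF n] by simp
      have "T - real n * \<mu> n < \<epsilon>" using h1 h2 cb by linarith
      then show "norm (real n * \<mu> n - T) < \<epsilon>" using h3 by simp
    qed
  qed
  show ?thesis using lim1 lim2 lim3 unfolding \<mu>_def V_def by simp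
qed

end
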